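(* Let $\alpha:\mathbb{C}\to\mathbb{C}$ be an exponential automorphism, i.e. a function satisfying $\alpha(z_1+z_2)=\alpha(z_1)+\alpha(z_2)$ and $\alpha(e^z)=e^{\alpha(z)}$ for all $z,z_1,z_2\in\mathbb{C}$. Suppose that either $\alpha(x)\in\mathbb{R}$ for all $x\in\mathbb{R}$, or $\alpha$ is continuous. Then $\alpha(2^{1/k})=2^{1/k}$ for $k=2,3,4$ and $\alpha(\ln 2)=\ln 2$.
   Context: Here $2^{1/k}$ denotes the positive real $k$th root of $2$, and $\ln 2$ the real natural logarithm of $2$. *)

theory Defs
  imports "HOL-Analysis.Analysis"
begin

definition exp_automorphism :: "(complex \<Rightarrow> complex) \<Rightarrow> bool" where
  "exp_automorphism \<alpha> \<longleftrightarrow>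
     (\<forall>z1 z2. \<alpha> (z1 + z2) = \<alpha> z1 + \<alpha> z2) \<and> (\<forall>z. \<alpha> (exp z) = exp (\<alpha> z))"

end

theory Submission
  imports Defs
begin

lemma add_props:
  fixes \<alpha> :: "complex \<Rightarrow> complex"
  assumes add: "\<And>a b. \<alpha> (a + b) = \<alpha> a + \<alpha> b"
  shows "\<alpha> 0 = 0" and "\<And>z. \<alpha> (- z) = - \<alpha> z"
    and "\<And>n z. \<alpha> (of_nat n * z) = of_nat n * \<alpha> z"
    and "\<And>a b. \<alpha> (a - b) = \<alpha> a - \<alpha> b"
proof -
  show z: "\<alpha> 0 = 0" using add[of 0 0] by simp
  show n: "\<And>z. \<alpha> (- z) = - \<alpha> z"
  proof -
    fix z show "\<alpha> (- z) = - \<alpha> z" using add[of z "-z"] z by (simp add: add_eq_0_iff)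
  qed
  show "\<And>n z. \<alpha> (of_nat n * z) = of_nat n * \<alpha> z"
  proof -
    fix n z show "\<alpha> (of_nat n * z) = of_nat n * \<alpha> z"
      by (induction n) (simp_all add: z distrib_right add)
  qed
  show "\<And>a b. \<alpha> (a - b) = \<alpha> a - \<alpha> b"
  proof -
    fix a b show "\<alpha> (a - b) = \<alpha> a - \<alpha> b" using add[of a "-b"] n[of b] by simp
  qed
qed

lemma fix_rats:
  fixes \<alpha> :: "complex \<Rightarrow> complex"
  assumes add: "\<And>a b. \<alpha> (a + b) = \<alpha> a + \<alpha> b" and one: "\<alpha> 1 = 1"
    and q: "(q::real) \<in> \<rat>"
  shows "\<alpha> (of_real q) = of_real q"
proof -
  note P = add_props[OF add]
  have nat: "\<alpha> (of_nat n) = of_nat n" for n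
    using P(3)[of n 1] one by simp
  have int: "\<alpha> (of_int i) = of_int i" for i
  proof (cases "i \<ge> 0")
    case True then show ?thesis using nat[of "nat i"] by simp
  next
    case False then show ?thesis using nat[of "nat (-i)"] P(2)[of "of_nat (nat (-i))"]
      by simp
  qed
  obtain a b where ab: "q = of_int a / of_int b" "b > 0"
    using q by (rule Rats_cases') auto
  have cq: "complex_of_real q = of_int a / of_int b" using ab by simp
  have bb: "(of_nat (nat b) :: complex) = of_int b" using ab(2) by simp
  have "of_nat (nat b) * complex_of_real q = of_int a"
    unfolding cq bb using ab(2) by simp
  then have "of_nat (nat b) * \<alpha> (of_real q) = of_int a"
    using P(3)[of "nat b" "of_real q"] int[of a] by simp
  moreover have "of_nat (nat b) * complex_of_real q = of_int a"
    unfolding cq bb using ab(2) by simp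
  ultimately have "of_int b * \<alpha> (of_real q) = of_int b * (of_real q :: complex)" using bb by simp
  moreover have "(of_int b :: complex) \<noteq> 0" using ab(2) by simp
  ultimately show ?thesis by simp
qed

lemma fix_reals:
  fixes \<alpha> :: "complex \<Rightarrow> complex"
  assumes "exp_automorphism \<alpha>"
    and "(\<forall>x::real. \<alpha> (complex_of_real x) \<in> \<real>) \<or> continuous_on UNIV \<alpha>"
  shows "\<alpha> (complex_of_real x) = complex_of_real x"
proof -
  have add: "\<And>a b. \<alpha> (a + b) = \<alpha> a + \<alpha> b" and ex: "\<And>z. \<alpha> (exp z) = exp (\<alpha> z)"
    using assms(1) unfolding exp_automorphism_def by auto
  note P = add_props[OF add]
  have one: "\<alpha> 1 = 1" using ex[of 0] P(1) by simp
  note R = fix_rats[OF add one]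
  show ?thesis using assms(2)
  proof
    assume c: "continuous_on UNIV \<alpha>"
    have cc: "continuous_on UNIV (\<lambda>x::real. \<alpha> (complex_of_real x))"
      by (rule continuous_on_compose2[OF c]) (auto intro!: continuous_intros)
    have "closed {x::real. \<alpha> (complex_of_real x) = complex_of_real x}"
      by (rule closed_Collect_eq[OF cc]) (auto intro!: continuous_intros)
    moreover have "\<rat> \<subseteq> {x::real. \<alpha> (complex_of_real x) = complex_of_real x}"
      using R by auto
    ultimately have "closure \<rat> \<subseteq> {x::real. \<alpha> (complex_of_real x) = complex_of_real x}"
      by (simp add: closure_minimal)
    then show ?thesis using Rats_closure_real by auto
  next
    assume r: "\<forall>x::real. \<alpha> (complex_of_real x) \<in> \<real>"
    have pos: "Re (\<alpha> (complex_of_real y)) > 0" if "y > 0" for y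
    proof -
      obtain t where t: "\<alpha> (complex_of_real (ln y)) = complex_of_real t"
        using Reals_cases[OF r[rule_format, of "ln y"]] by blast
      have "\<alpha> (complex_of_real y) = \<alpha> (exp (complex_of_real (ln y)))"
        using that by (simp add: exp_of_real)
      also have "\<dots> = complex_of_real (exp t)" using ex[of "complex_of_real (ln y)"] t by (simp only: exp_of_real)
      finally show ?thesis by simp
    qed
    obtain u where u: "\<alpha> (complex_of_real x) = complex_of_real u"
      using Reals_cases[OF r[rule_format, of x]] by blast
    have "u = x"
    proof (rule ccontr)
      assume "u \<noteq> x"
      then consider "u < x" | "x < u" by linarith
      then show False
      proof cases
        case 1
        then obtain p where p: "p \<in> \<rat>" "u < p" "p < x" using Rats_dense_in_real by blast
        have "Re (\<alpha> (complex_of_real (x - p))) > 0" by (rule pos) (use p in simp)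
        moreover have "\<alpha> (complex_of_real (x - p)) = complex_of_real (u - p)"
          by (simp only: of_real_diff P(4) R[OF p(1)] u)
        ultimately show False using p by simp
      next
        case 2
        then obtain p where p: "p \<in> \<rat>" "x < p" "p < u" using Rats_dense_in_real by blast
        have "Re (\<alpha> (complex_of_real (p - x))) > 0" by (rule pos) (use p in simp)
        moreover have "\<alpha> (complex_of_real (p - x)) = complex_of_real (p - u)"
          by (simp only: of_real_diff P(4) R[OF p(1)] u)
        ultimately show False using p by simp
      qed
    qed
    then show ?thesis using u by simp
  qed
qed

theorem mainTheorem5:
  fixes \<alpha> :: "complex \<Rightarrow> complex"
  assumes "exp_automorphism \<alpha>"
    and "(\<forall>x::real. \<alpha> (complex_of_real x) \<in> \<real>) \<or> continuous_on UNIV \<alpha>"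
  shows "(\<forall>k\<in>{2,3,4::nat}. \<alpha> (complex_of_real (root k 2)) = complex_of_real (root k 2))
         \<and> \<alpha> (complex_of_real (ln 2)) = complex_of_real (ln 2)"
  by (simp add: fix_reals[OF assms])

end
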